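(* $Q$ is a Sylow $q$-subgroup of $X$ and $P$ is a Sylow $p$-subgroup of $X$; that is, every finite $q$-subgroup of $X$ is conjugate in $X$ to a subgroup of $Q$, and every finite $p$-subgroup of $X$ is conjugate in $X$ to a subgroup of $P$.
   Context: Let $p$ and $q$ be distinct odd primes. Let $m$ be the smallest positive integer such that $p$ divides $|\mathrm{Sp}(2m,q)|$, and $n$ the smallest positive integer such that $q$ divides $|\mathrm{Sp}(2n,p)|$. Let $Q$ be an extraspecial $q$-group of order $q^{2m+1}$ and exponent $q$, and let $A = Q\rtimes\langle \alpha\rangle$ where $\alpha$ has order $p$, acts trivially on $Z(Q)$ and faithfully on $Q/Z(Q)$. Let $P$ be an extraspecial $p$-group of order $p^{2n+1}$ and exponent $p$, and let $B = P\rtimes\langle\beta\rangle$ where $\beta$ has order $q$, acts trivially on $Z(P)$ and faithfully on $P/Z(P)$. Then $C_A = Z(Q)\times\langle\alpha\rangle$ is a cyclic self-normalizing (nilpotent) subgroup of $A$ of order $pq$, and $C_B = Z(P)\times\langle \beta\rangle$ is a cyclic self-normalizing subgroup of $B$ of order $pq$. Let $X = A *_C B$ be the free product of $A$ and $B$ amalgamated along an isomorphism $C_A\to C_B$ (which necessarily maps $\langle\alpha\rangle$ onto $Z(P)$ and $Z(Q)$ onto $\langle\beta\rangle$); regard $A$, $B$ as subgroups of $X$ with $A\cap B = C = Z(P)\times Z(Q)$. *)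

theory Defs
  imports "HOL-Algebra.Algebra"
begin

text \<open>Standard alternating form J = [[0, I_m], [-I_m, 0]] on F_q^(2m), indices 0..2m-1.\<close>
definition sympJ :: "nat \<Rightarrow> nat \<Rightarrow> nat \<Rightarrow> int" where
  "sympJ m k l = (if k < m \<and> l = k + m then 1 else if l < m \<and> k = l + m then -1 else 0)"

text \<open>Sp(2m,q): the 2m x 2m matrices over Z/qZ (entries represented in 0..q-1, zero outside
  the index range) with M^T J M = J modulo q.\<close>
definition Sp_mats :: "nat \<Rightarrow> int \<Rightarrow> (nat \<Rightarrow> nat \<Rightarrow> int) set" where
  "Sp_mats m q = {M. (\<forall>i j. (2*m \<le> i \<or> 2*m \<le> j) \<longrightarrow> M i j = 0)
      \<and> (\<forall>i j. 0 \<le> M i j \<and> M i j < q)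
      \<and> (\<forall>i<2*m. \<forall>j<2*m.
           (\<Sum>k<2*m. \<Sum>l<2*m. M k i * sympJ m k l * M l j) mod q = sympJ m i j mod q)}"

definition Sp_order :: "nat \<Rightarrow> int \<Rightarrow> nat" where
  "Sp_order m q = card (Sp_mats m q)"

definition sub_center :: "('a, 'b) monoid_scheme \<Rightarrow> 'a set \<Rightarrow> 'a set" where
  "sub_center G H = {z \<in> H. \<forall>h\<in>H. z \<otimes>\<^bsub>G\<^esub> h = h \<otimes>\<^bsub>G\<^esub> z}"

definition maximal_subgroup_of :: "('a, 'b) monoid_scheme \<Rightarrow> 'a set \<Rightarrow> 'a set \<Rightarrow> bool" where
  "maximal_subgroup_of G M H \<longleftrightarrow> subgroup M G \<and> M \<subset> H \<and>
     (\<forall>K. subgroup K G \<longrightarrow> M \<subseteq> K \<longrightarrow> K \<subseteq> H \<longrightarrow> K = M \<or> K = H)"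

definition frattini :: "('a, 'b) monoid_scheme \<Rightarrow> 'a set \<Rightarrow> 'a set" where
  "frattini G H = H \<inter> \<Inter> {M. maximal_subgroup_of G M H}"

definition extraspecial :: "('a, 'b) monoid_scheme \<Rightarrow> nat \<Rightarrow> 'a set \<Rightarrow> bool" where
  "extraspecial G r H \<longleftrightarrow> subgroup H G \<and> finite H \<and> (\<exists>k. card H = r ^ k)
     \<and> card (sub_center G H) = r
     \<and> derived G H = sub_center G H \<and> frattini G H = sub_center G H"

definition has_exponent :: "('a, 'b) monoid_scheme \<Rightarrow> 'a set \<Rightarrow> nat \<Rightarrow> bool" where
  "has_exponent G H e \<longleftrightarrow> (\<forall>x\<in>H. x [^]\<^bsub>G\<^esub> e = \<one>\<^bsub>G\<^esub>)"

definition conj_by :: "('a, 'b) monoid_scheme \<Rightarrow> 'a \<Rightarrow> 'a \<Rightarrow> 'a" where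
  "conj_by G g x = g \<otimes>\<^bsub>G\<^esub> x \<otimes>\<^bsub>G\<^esub> inv\<^bsub>G\<^esub> g"

text \<open>The element a of G (acting by conjugation, of prime order r) normalizes H,
 centralizes Z(H), and the cyclic group <a> acts faithfully on H/Z(H), and H <#> <a> is the
 internal semidirect product H \<rtimes> <a>.\<close>
definition good_action :: "('a, 'b) monoid_scheme \<Rightarrow> 'a set \<Rightarrow> 'a \<Rightarrow> nat \<Rightarrow> bool" where
  "good_action G H a r \<longleftrightarrow> a \<in> carrier G \<and> group.ord G a = r
     \<and> conj_by G a ` H = H
     \<and> H \<inter> generate G {a} = {\<one>\<^bsub>G\<^esub>}
     \<and> (\<forall>z\<in>sub_center G H. a \<otimes>\<^bsub>G\<^esub> z = z \<otimes>\<^bsub>G\<^esub> a)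
     \<and> (\<forall>k::nat. (\<forall>x\<in>H. inv\<^bsub>G\<^esub> x \<otimes>\<^bsub>G\<^esub> conj_by G (a [^]\<^bsub>G\<^esub> k) x \<in> sub_center G H)
                 \<longrightarrow> a [^]\<^bsub>G\<^esub> k = \<one>\<^bsub>G\<^esub>)"

definition alternating :: "'a set \<Rightarrow> 'a set \<Rightarrow> 'a set \<Rightarrow> 'a list \<Rightarrow> bool" where
  "alternating S1 S2 C gs \<longleftrightarrow> gs \<noteq> [] \<and>
     (\<forall>i<length gs. gs ! i \<in> (if even i then S1 - C else S2 - C))"

text \<open>G is the free product of its subgroups A and B amalgamated along C = A \<inter> B:
 G is generated by A \<union> B, and every reduced (alternating) product is nontrivial,
 i.e. the canonical homomorphism A *_C B \<rightarrow> G is an isomorphism (normal form theorem).\<close>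
definition is_amalgamated_product ::
  "('a, 'b) monoid_scheme \<Rightarrow> 'a set \<Rightarrow> 'a set \<Rightarrow> 'a set \<Rightarrow> bool" where
  "is_amalgamated_product G A B C \<longleftrightarrow> group G \<and> subgroup A G \<and> subgroup B G \<and> A \<inter> B = C
     \<and> generate G (A \<union> B) = carrier G
     \<and> (\<forall>gs. (alternating A B C gs \<or> alternating B A C gs)
             \<longrightarrow> foldr (\<otimes>\<^bsub>G\<^esub>) gs \<one>\<^bsub>G\<^esub> \<noteq> \<one>\<^bsub>G\<^esub>)"

end

theory Submission
  imports Defs
begin

locale amalg = group G for G (structure) +
  fixes A B C :: "'a set"
  assumes subA: "subgroup A G" and subB: "subgroup B G" and ABC: "A \<inter> B = C"
    and gen: "generate G (A \<union> B) = carrier G"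
    and nontriv: "\<And>gs. alternating A B C gs \<or> alternating B A C gs \<Longrightarrow> foldr (\<otimes>) gs \<one> \<noteq> \<one>"
begin

definition prd :: "'a list \<Rightarrow> 'a" where "prd xs = foldr (\<otimes>) xs \<one>"

definition PP :: "'a \<Rightarrow> 'a \<Rightarrow> bool" where "PP x y \<longleftrightarrow> (x \<in> A \<longleftrightarrow> y \<notin> A)"

definition alt0 :: "'a list \<Rightarrow> bool" where
  "alt0 xs \<longleftrightarrow> set xs \<subseteq> (A \<union> B) - C \<and> successively PP xs"

definition Alt :: "'a \<Rightarrow> nat \<Rightarrow> bool" where
  "Alt g r \<longleftrightarrow> (r = 0 \<and> g \<in> C) \<or> (\<exists>xs. alt0 xs \<and> xs \<noteq> [] \<and> length xs = r \<and> g = prd xs)"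

definition L :: "'a \<Rightarrow> nat" where "L g = (LEAST r. Alt g r)"

lemma A_car: "A \<subseteq> carrier G" using subA by (rule subgroup.subset)
lemma B_car: "B \<subseteq> carrier G" using subB by (rule subgroup.subset)
lemma C_A: "C \<subseteq> A" using ABC by blast
lemma C_B: "C \<subseteq> B" using ABC by blast
lemma C_car: "C \<subseteq> carrier G" using C_A A_car by blast
lemma one_C: "\<one> \<in> C" using ABC subgroup.one_closed[OF subA] subgroup.one_closed[OF subB] by blast
lemma inv_C: "c \<in> C \<Longrightarrow> inv c \<in> C"
  using ABC subgroup.m_inv_closed[OF subA] subgroup.m_inv_closed[OF subB] by blast
lemma mult_C: "c \<in> C \<Longrightarrow> d \<in> C \<Longrightarrow> c \<otimes> d \<in> C"
  using ABC subgroup.m_closed[OF subA] subgroup.m_closed[OF subB] by blast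

lemma inv_A_iff: "x \<in> carrier G \<Longrightarrow> inv x \<in> A \<longleftrightarrow> x \<in> A"
  using subgroup.m_inv_closed[OF subA] inv_inv by metis
lemma inv_B_iff: "x \<in> carrier G \<Longrightarrow> inv x \<in> B \<longleftrightarrow> x \<in> B"
  using subgroup.m_inv_closed[OF subB] inv_inv by metis
lemma inv_C_iff: "x \<in> carrier G \<Longrightarrow> inv x \<in> C \<longleftrightarrow> x \<in> C"
  using inv_C inv_inv by metis

lemma AB_car: "x \<in> A \<union> B \<Longrightarrow> x \<in> carrier G" using A_car B_car by blast

lemma prd_Nil[simp]: "prd [] = \<one>" by (simp add: prd_def)
lemma prd_Cons[simp]: "prd (x # xs) = x \<otimes> prd xs" by (simp add: prd_def)
lemma prd_car: "set xs \<subseteq> carrier G \<Longrightarrow> prd xs \<in> carrier G"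
  by (induction xs) auto
lemma prd_append: "set xs \<subseteq> carrier G \<Longrightarrow> set ys \<subseteq> carrier G \<Longrightarrow> prd (xs @ ys) = prd xs \<otimes> prd ys"
  by (induction xs) (auto simp: m_assoc prd_car)
lemma prd_inv: "set xs \<subseteq> carrier G \<Longrightarrow> inv (prd xs) = prd (rev (map (\<lambda>x. inv x) xs))"
proof (induction xs)
  case Nil then show ?case by simp
next
  case (Cons x xs)
  then have x: "x \<in> carrier G" and xs: "set xs \<subseteq> carrier G" by auto
  have s: "set (rev (map (\<lambda>x. inv x) xs)) \<subseteq> carrier G" using xs by auto
  have "inv (prd (x # xs)) = inv (prd xs) \<otimes> inv x" using x xs by (simp add: inv_mult_group prd_car)
  also have "\<dots> = prd (rev (map (\<lambda>x. inv x) xs) @ [inv x])"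
    using Cons.IH[OF xs] prd_append[OF s, of "[inv x]"] x by simp
  finally show ?case by simp
qed

lemma alt0_car: "alt0 xs \<Longrightarrow> set xs \<subseteq> carrier G"
  unfolding alt0_def using A_car B_car by blast

lemma alternating_I:
  assumes "alt0 xs" "xs \<noteq> []"
  shows "alternating A B C xs \<or> alternating B A C xs"
proof -
  have s: "successively PP xs" and st: "set xs \<subseteq> (A \<union> B) - C" using assms unfolding alt0_def by auto
  have mem: "\<And>i. i < length xs \<Longrightarrow> (xs!i \<in> A - C \<and> xs!i \<notin> B) \<or> (xs!i \<in> B - C \<and> xs!i \<notin> A)"
    using st ABC nth_mem by blast
  have key: "\<And>i. i < length xs \<Longrightarrow> (xs!i \<in> A \<longleftrightarrow> (even i \<longleftrightarrow> hd xs \<in> A))"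
  proof -
    fix i show "i < length xs \<Longrightarrow> (xs!i \<in> A \<longleftrightarrow> (even i \<longleftrightarrow> hd xs \<in> A))"
    proof (induction i)
      case 0 then show ?case using assms(2) by (simp add: hd_conv_nth)
    next
      case (Suc i)
      then have "PP (xs!i) (xs ! Suc i)" using successively_nth[OF s] by simp
      then show ?case using Suc by (auto simp: PP_def)
    qed
  qed
  show ?thesis
  proof (cases "hd xs \<in> A")
    case True
    then have "alternating A B C xs" unfolding alternating_def using assms(2) key mem by fastforce
    then show ?thesis by blast
  next
    case False
    then have "alternating B A C xs" unfolding alternating_def using assms(2) key mem by fastforce
    then show ?thesis by blast
  qed
qed

lemma prd_ne_one: "alt0 xs \<Longrightarrow> xs \<noteq> [] \<Longrightarrow> prd xs \<noteq> \<one>"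
  using alternating_I nontriv unfolding prd_def by blast


lemma alt0_Nil[simp]: "alt0 []" by (simp add: alt0_def)

lemma alt0_Cons: "alt0 (x # xs) \<longleftrightarrow> x \<in> (A \<union> B) - C \<and> alt0 xs \<and> (xs = [] \<or> PP x (hd xs))"
  unfolding alt0_def using successively_Cons[of PP x xs] by auto

lemma alt0_append: "alt0 (xs @ ys) \<longleftrightarrow> alt0 xs \<and> alt0 ys \<and> (xs = [] \<or> ys = [] \<or> PP (last xs) (hd ys))"
  unfolding alt0_def using successively_append_iff[of PP xs ys] by auto

lemma mult_in_iff_l: "subgroup S G \<Longrightarrow> c \<in> S \<Longrightarrow> x \<in> carrier G \<Longrightarrow> c \<otimes> x \<in> S \<longleftrightarrow> x \<in> S"
proof
  assume S: "subgroup S G" and c: "c \<in> S" and x: "x \<in> carrier G" and cx: "c \<otimes> x \<in> S"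
  have cc: "c \<in> carrier G" using S c subgroup.subset by blast
  have "x = inv c \<otimes> (c \<otimes> x)" using cc x by (simp add: m_assoc[symmetric])
  then show "x \<in> S" using S c cx subgroup.m_closed subgroup.m_inv_closed by metis
qed (meson subgroup.m_closed)

lemma mult_in_iff_r: "subgroup S G \<Longrightarrow> c \<in> S \<Longrightarrow> x \<in> carrier G \<Longrightarrow> x \<otimes> c \<in> S \<longleftrightarrow> x \<in> S"
proof
  assume S: "subgroup S G" and c: "c \<in> S" and x: "x \<in> carrier G" and cx: "x \<otimes> c \<in> S"
  have cc: "c \<in> carrier G" using S c subgroup.subset by blast
  have "x = (x \<otimes> c) \<otimes> inv c" using cc x by (simp add: m_assoc)
  then show "x \<in> S" using S c cx subgroup.m_closed subgroup.m_inv_closed by metis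
qed (meson subgroup.m_closed)

lemma Cmul_l:
  assumes c: "c \<in> C" and x: "x \<in> (A \<union> B) - C"
  shows "c \<otimes> x \<in> (A \<union> B) - C \<and> (c \<otimes> x \<in> A \<longleftrightarrow> x \<in> A)"
proof -
  have xc: "x \<in> carrier G" using x AB_car by blast
  have iA: "c \<otimes> x \<in> A \<longleftrightarrow> x \<in> A" using mult_in_iff_l[OF subA] c C_A xc by blast
  have iB: "c \<otimes> x \<in> B \<longleftrightarrow> x \<in> B" using mult_in_iff_l[OF subB] c C_B xc by blast
  show ?thesis using iA iB x ABC by blast
qed

lemma Cmul_r:
  assumes c: "c \<in> C" and x: "x \<in> (A \<union> B) - C"
  shows "x \<otimes> c \<in> (A \<union> B) - C \<and> (x \<otimes> c \<in> A \<longleftrightarrow> x \<in> A)"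
proof -
  have xc: "x \<in> carrier G" using x AB_car by blast
  have iA: "x \<otimes> c \<in> A \<longleftrightarrow> x \<in> A" using mult_in_iff_r[OF subA] c C_A xc by blast
  have iB: "x \<otimes> c \<in> B \<longleftrightarrow> x \<in> B" using mult_in_iff_r[OF subB] c C_B xc by blast
  show ?thesis using iA iB x ABC by blast
qed

lemma same_mul:
  assumes x: "x \<in> (A \<union> B) - C" and y: "y \<in> (A \<union> B) - C" and xy: "y \<in> A \<longleftrightarrow> x \<in> A"
    and z: "y \<otimes> x \<notin> C"
  shows "y \<otimes> x \<in> (A \<union> B) - C \<and> (y \<otimes> x \<in> A \<longleftrightarrow> x \<in> A)"
proof (cases "x \<in> A")
  case True
  then have "y \<otimes> x \<in> A" using xy subgroup.m_closed[OF subA] by blast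
  then show ?thesis using True z by blast
next
  case False
  then have "x \<in> B" "y \<in> B" "y \<notin> A" using x y xy by auto
  then have "y \<otimes> x \<in> B" using subgroup.m_closed[OF subB] by blast
  then show ?thesis using False z ABC by blast
qed

lemma same_mul_A: "x \<in> A \<Longrightarrow> y \<in> A \<Longrightarrow> y \<otimes> x \<in> A" using subgroup.m_closed[OF subA] by blast
lemma same_mul_B: "x \<in> B \<Longrightarrow> y \<in> B \<Longrightarrow> y \<otimes> x \<in> B" using subgroup.m_closed[OF subB] by blast

lemma alt0_Cmul:
  assumes c: "c \<in> C" and a: "alt0 (x # xs)"
  shows "alt0 ((c \<otimes> x) # xs)"
proof -
  have x: "x \<in> (A \<union> B) - C" and xs: "alt0 xs" and h: "xs = [] \<or> PP x (hd xs)" using a alt0_Cons by auto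
  have "c \<otimes> x \<in> (A \<union> B) - C" and e: "c \<otimes> x \<in> A \<longleftrightarrow> x \<in> A" using Cmul_l[OF c x] by auto
  moreover have "xs = [] \<or> PP (c \<otimes> x) (hd xs)" using h e unfolding PP_def by auto
  ultimately show ?thesis using xs alt0_Cons by auto
qed

lemma AltI: "alt0 xs \<Longrightarrow> xs \<noteq> [] \<Longrightarrow> g = prd xs \<Longrightarrow> Alt g (length xs)"
  unfolding Alt_def by blast

lemma Alt_car: "Alt g r \<Longrightarrow> g \<in> carrier G"
  unfolding Alt_def using C_car prd_car alt0_car by blast

lemma Alt_step:
  assumes g: "Alt g r" and y: "y \<in> A \<union> B"
  shows "\<exists>r'. Alt (y \<otimes> g) r' \<and> r \<le> r' + 1 \<and> r' \<le> r + 1"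
proof -
  have yc: "y \<in> carrier G" using y AB_car by blast
  from g consider (z) "r = 0" "g \<in> C" | (n) xs where "alt0 xs" "xs \<noteq> []" "length xs = r" "g = prd xs"
    unfolding Alt_def by blast
  then show ?thesis
  proof cases
    case z
    have "y \<otimes> g \<in> A \<union> B" using y z(2) C_A C_B same_mul_A same_mul_B by blast
    show ?thesis
    proof (cases "y \<otimes> g \<in> C")
      case True then show ?thesis using z unfolding Alt_def by auto
    next
      case False
      have "alt0 [y \<otimes> g]" using False \<open>y \<otimes> g \<in> A \<union> B\<close> alt0_Cons by auto
      moreover have "prd [y \<otimes> g] = y \<otimes> g" using yc z C_car by auto
      ultimately have "Alt (y \<otimes> g) (length [y \<otimes> g])" by (intro AltI) auto
      then show ?thesis using z by auto
    qed
  next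
    case n
    then obtain x xs' where xs: "xs = x # xs'" by (cases xs) auto
    have a: "alt0 (x # xs')" using n xs by simp
    have x: "x \<in> (A \<union> B) - C" and axs': "alt0 xs'" and h: "xs' = [] \<or> PP x (hd xs')" using a alt0_Cons by auto
    have xc: "x \<in> carrier G" using x AB_car by blast
    have pc: "prd xs' \<in> carrier G" using axs' alt0_car prd_car by blast
    have g_eq: "y \<otimes> g = (y \<otimes> x) \<otimes> prd xs'" using n xs yc xc pc by (simp add: m_assoc)
    show ?thesis
    proof (cases "y \<in> C")
      case True
      have "alt0 ((y \<otimes> x) # xs')" using alt0_Cmul[OF True a] .
      then have "Alt (y \<otimes> g) (length ((y \<otimes> x) # xs'))" using g_eq by (intro AltI) auto
      then show ?thesis using n xs by auto
    next
      case yC: False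
      show ?thesis
      proof (cases "y \<in> A \<longleftrightarrow> x \<in> A")
        case same: True
        have y': "y \<in> (A \<union> B) - C" using y yC by blast
        show ?thesis
        proof (cases "y \<otimes> x \<in> C")
          case False
          have "y \<otimes> x \<in> (A \<union> B) - C" and e: "y \<otimes> x \<in> A \<longleftrightarrow> x \<in> A" using same_mul[OF x y' same False] by auto
          moreover have "xs' = [] \<or> PP (y \<otimes> x) (hd xs')" using h e unfolding PP_def by auto
          ultimately have "alt0 ((y \<otimes> x) # xs')" using axs' alt0_Cons by auto
          then have "Alt (y \<otimes> g) (length ((y \<otimes> x) # xs'))" using g_eq by (intro AltI) auto
          then show ?thesis using n xs by auto
        next
          case zC: True
          show ?thesis
          proof (cases xs')
            case Nil
            then have "y \<otimes> g = y \<otimes> x" using g_eq yc xc by simp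
            then have "Alt (y \<otimes> g) 0" using zC unfolding Alt_def by simp
            then show ?thesis using n xs Nil by auto
          next
            case (Cons x2 xs'')
            have a2: "alt0 (((y \<otimes> x) \<otimes> x2) # xs'')" using alt0_Cmul[OF zC] axs' Cons by simp
            have x2c: "x2 \<in> carrier G" using alt0_car[OF axs'] Cons by auto
            have p2: "prd xs'' \<in> carrier G" using alt0_car[OF axs'] Cons prd_car by auto
            have "y \<otimes> g = ((y \<otimes> x) \<otimes> x2) \<otimes> prd xs''" using g_eq Cons yc xc x2c p2 by (simp add: m_assoc)
            then have "Alt (y \<otimes> g) (length (((y \<otimes> x) \<otimes> x2) # xs''))" using a2 by (intro AltI) auto
            moreover have "r = length xs'' + 2" using n xs Cons by simp
            ultimately show ?thesis by (intro exI[of _ "Suc (length xs'')"]) auto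
          qed
        qed
      next
        case diff: False
        have "alt0 (y # x # xs')" using a y yC diff alt0_Cons[of y "x # xs'"] unfolding PP_def by auto
        moreover have "y \<otimes> g = prd (y # x # xs')" using n xs by simp
        ultimately have "Alt (y \<otimes> g) (length (y # x # xs'))" by (intro AltI) auto
        then show ?thesis using n xs by auto
      qed
    qed
  qed
qed

lemma Alt_multi:
  assumes g: "Alt g r" and ys: "set ys \<subseteq> A \<union> B"
  shows "\<exists>r'. Alt (prd ys \<otimes> g) r' \<and> r \<le> r' + length ys"
  using ys
proof (induction ys)
  case Nil
  have "g \<in> carrier G" using Alt_car[OF g] .
  then show ?case using g by auto
next
  case (Cons y ys)
  have y: "y \<in> A \<union> B" and ys: "set ys \<subseteq> A \<union> B" using Cons.prems by auto
  obtain r' where r': "Alt (prd ys \<otimes> g) r'" "r \<le> r' + length ys"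
    using Cons.IH[OF ys] by blast
  obtain r'' where r'': "Alt (y \<otimes> (prd ys \<otimes> g)) r''" "r' \<le> r'' + 1"
    using Alt_step[OF r'(1) y] by blast
  have yc: "y \<in> carrier G" using y AB_car by blast
  have pc: "prd ys \<in> carrier G" using ys AB_car prd_car by blast
  have "prd (y # ys) \<otimes> g = y \<otimes> (prd ys \<otimes> g)" using yc pc Alt_car[OF g] by (simp add: m_assoc)
  moreover have "r \<le> r'' + length (y # ys)" using r'(2) r''(2) by simp
  ultimately show ?case using r''(1) by metis
qed

lemma gen_prd: "g \<in> generate G (A \<union> B) \<Longrightarrow> \<exists>ys. set ys \<subseteq> A \<union> B \<and> g = prd ys"
proof (induction rule: generate.induct)
  case one
  then show ?case by (intro exI[of _ "[]"]) simp
next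
  case (incl h)
  then show ?case using AB_car by (intro exI[of _ "[h]"]) auto
next
  case (inv h)
  then have "inv h \<in> A \<union> B" using inv_A_iff inv_B_iff AB_car by blast
  then show ?case using inv_A_iff AB_car[OF inv] by (intro exI[of _ "[inv h]"]) auto
next
  case (eng h1 h2)
  then obtain ys1 ys2 where y: "set ys1 \<subseteq> A \<union> B" "h1 = prd ys1" "set ys2 \<subseteq> A \<union> B" "h2 = prd ys2" by blast
  have c: "set ys1 \<subseteq> carrier G" "set ys2 \<subseteq> carrier G" using y AB_car by auto
  have "h1 \<otimes> h2 = prd (ys1 @ ys2)" using prd_append[OF c] y by simp
  then show ?case using y by (intro exI[of _ "ys1 @ ys2"]) auto
qed

lemma Alt_exists: "g \<in> carrier G \<Longrightarrow> \<exists>r. Alt g r"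
proof -
  assume "g \<in> carrier G"
  then obtain ys where ys: "set ys \<subseteq> A \<union> B" "g = prd ys" using gen_prd gen by blast
  have "Alt \<one> 0" using one_C unfolding Alt_def by simp
  then obtain r where "Alt (prd ys \<otimes> \<one>) r" using Alt_multi[OF _ ys(1)] by blast
  moreover have "prd ys \<in> carrier G" using ys AB_car prd_car by (meson subset_iff)
  then have "prd ys \<otimes> \<one> = g" using ys by simp
  ultimately show ?thesis by auto
qed

lemma Alt_one: "Alt \<one> r \<Longrightarrow> r = 0"
  unfolding Alt_def using prd_ne_one by metis

lemma alt0_inv: "alt0 xs \<Longrightarrow> alt0 (rev (map (\<lambda>x. inv x) xs))"
proof -
  assume a: "alt0 xs"
  have st: "set xs \<subseteq> (A \<union> B) - C" and s: "successively PP xs" using a unfolding alt0_def by auto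
  have "set (rev (map (\<lambda>x. inv x) xs)) \<subseteq> (A \<union> B) - C"
  proof
    fix z assume "z \<in> set (rev (map (\<lambda>x. inv x) xs))"
    then obtain x where x: "x \<in> set xs" "z = inv x" by auto
    then have xc: "x \<in> carrier G" using st AB_car by blast
    show "z \<in> (A \<union> B) - C" using x st inv_A_iff[OF xc] inv_B_iff[OF xc] inv_C_iff[OF xc] by blast
  qed
  moreover have "successively PP (rev (map (\<lambda>x. inv x) xs))"
    unfolding successively_rev successively_map
  proof (rule successively_mono[OF s])
    fix x y assume "x \<in> set xs" "y \<in> set xs" "PP x y"
    then show "PP (inv y) (inv x)" using inv_A_iff st AB_car unfolding PP_def by (metis DiffD1 in_mono)
  qed
  ultimately show ?thesis unfolding alt0_def by blast
qed


lemma Alt_inv: "Alt g r \<Longrightarrow> Alt (inv g) r"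
proof -
  assume a: "Alt g r"
  from a consider (z) "r = 0" "g \<in> C" | (n) xs where "alt0 xs" "xs \<noteq> []" "length xs = r" "g = prd xs"
    unfolding Alt_def by blast
  then show "Alt (inv g) r"
  proof cases
    case z then show ?thesis using inv_C unfolding Alt_def by blast
  next
    case n
    have "inv g = prd (rev (map (\<lambda>x. inv x) xs))" using n prd_inv alt0_car by blast
    moreover have "alt0 (rev (map (\<lambda>x. inv x) xs))" using alt0_inv n by blast
    moreover have "rev (map (\<lambda>x. inv x) xs) \<noteq> []" using n by simp
    ultimately have "Alt (inv g) (length (rev (map (\<lambda>x. inv x) xs)))" by (intro AltI)
    then show ?thesis using n by simp
  qed
qed

lemma Alt_unique_aux:
  assumes a: "Alt g r" and b: "Alt g r'" and lt: "r' < r"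
  shows False
proof -
  have gc: "g \<in> carrier G" using Alt_car[OF a] .
  have b': "Alt (inv g) r'" using Alt_inv[OF b] .
  obtain ys where ys: "set ys \<subseteq> A \<union> B" "prd ys = inv g" "length ys \<le> max r' 1"
  proof (cases "r' = 0")
    case True
    then have "inv g \<in> C" using b' Alt_one unfolding Alt_def using prd_ne_one by auto
    moreover have "inv g \<in> carrier G" using gc by simp
    ultimately show ?thesis using that[of "[inv g]"] C_A by auto
  next
    case False
    then obtain xs where "alt0 xs" "length xs = r'" "inv g = prd xs" using b' unfolding Alt_def by blast
    then show ?thesis using that[of xs] unfolding alt0_def by auto
  qed
  obtain r'' where r'': "Alt (prd ys \<otimes> g) r''" "r \<le> r'' + length ys" using Alt_multi[OF a ys(1)] by blast
  have "prd ys \<otimes> g = \<one>" using ys(2) gc by simp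
  then have "r'' = 0" using r''(1) Alt_one by simp
  then have rle: "r \<le> length ys" using r''(2) by simp
  show False
  proof (cases "r' = 0")
    case False then show False using rle ys(3) lt by simp
  next
    case True
    then have gC: "g \<in> C" and r1: "r = 1" using b rle ys(3) lt unfolding Alt_def by auto
    then obtain xs where "alt0 xs" "length xs = 1" "g = prd xs" using a unfolding Alt_def by auto
    then obtain x where "xs = [x]" "x \<in> (A \<union> B) - C" "g = x" unfolding alt0_def
      by (cases xs) (auto simp: AB_car)
    then show False using gC by blast
  qed
qed

lemma Alt_unique: "Alt g r \<Longrightarrow> Alt g r' \<Longrightarrow> r = r'"
  using Alt_unique_aux by (metis linorder_neqE_nat)

lemma L_eq: "Alt g r \<Longrightarrow> L g = r"
  unfolding L_def using Alt_unique by (metis (mono_tags, lifting) LeastI)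

lemma Alt_L: "g \<in> carrier G \<Longrightarrow> Alt g (L g)"
  using Alt_exists L_eq by metis

lemma L_alt0: "alt0 xs \<Longrightarrow> L (prd xs) = length xs"
proof (cases "xs = []")
  case True
  then show ?thesis using L_eq one_C unfolding Alt_def by simp
next
  case False
  assume "alt0 xs"
  then show ?thesis using L_eq AltI False by blast
qed

lemma L_zero_iff: "g \<in> carrier G \<Longrightarrow> L g = 0 \<longleftrightarrow> g \<in> C"
proof
  assume gc: "g \<in> carrier G" and "L g = 0"
  then have "Alt g 0" using Alt_L by metis
  then show "g \<in> C" unfolding Alt_def by auto
next
  assume "g \<in> C" then show "L g = 0" using L_eq unfolding Alt_def by simp
qed

lemma L_inv: "g \<in> carrier G \<Longrightarrow> L (inv g) = L g"
  using Alt_L Alt_inv L_eq by metis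

lemma L_step: "g \<in> carrier G \<Longrightarrow> y \<in> A \<union> B \<Longrightarrow> L (y \<otimes> g) \<le> L g + 1"
  using Alt_step[OF Alt_L] L_eq by metis

lemma Alt_Cl: "c \<in> C \<Longrightarrow> Alt g r \<Longrightarrow> Alt (c \<otimes> g) r"
proof -
  assume c: "c \<in> C" and a: "Alt g r"
  from a consider (z) "r = 0" "g \<in> C" | (n) xs where "alt0 xs" "xs \<noteq> []" "length xs = r" "g = prd xs"
    unfolding Alt_def by blast
  then show "Alt (c \<otimes> g) r"
  proof cases
    case z then show ?thesis using mult_C c unfolding Alt_def by blast
  next
    case n
    then obtain x xs' where xs: "xs = x # xs'" by (cases xs) auto
    have a2: "alt0 ((c \<otimes> x) # xs')" using alt0_Cmul[OF c] n xs by simp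
    have cc: "c \<in> carrier G" using c C_car by blast
    have xc: "x \<in> carrier G" and pc: "prd xs' \<in> carrier G" using alt0_car[OF n(1)] xs prd_car by auto
    have "c \<otimes> g = prd ((c \<otimes> x) # xs')" using n xs cc xc pc by (simp add: m_assoc)
    then have "Alt (c \<otimes> g) (length ((c \<otimes> x) # xs'))" using a2 by (intro AltI) auto
    then show ?thesis using n xs by simp
  qed
qed

lemma L_Cl: "c \<in> C \<Longrightarrow> g \<in> carrier G \<Longrightarrow> L (c \<otimes> g) = L g"
  using Alt_Cl Alt_L L_eq by metis

lemma L_Cr: "c \<in> C \<Longrightarrow> g \<in> carrier G \<Longrightarrow> L (g \<otimes> c) = L g"
proof -
  assume c: "c \<in> C" and g: "g \<in> carrier G"
  have cc: "c \<in> carrier G" using c C_car by blast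
  have "L (g \<otimes> c) = L (inv (g \<otimes> c))" using L_inv g cc by simp
  also have "inv (g \<otimes> c) = inv c \<otimes> inv g" using g cc by (simp add: inv_mult_group)
  also have "L (inv c \<otimes> inv g) = L (inv g)" using L_Cl inv_C c g by simp
  also have "\<dots> = L g" using L_inv g by simp
  finally show ?thesis .
qed


lemma last_rev_inv: "us \<noteq> [] \<Longrightarrow> last (rev (map (\<lambda>x. inv x) us)) = inv (hd us)"
  by (cases us) auto

lemma even_core:
  assumes xs: "alt0 xs" "length xs = 2*R" and u: "u \<in> carrier G"
  shows "L u + R \<le> max (L (prd (take R xs) \<otimes> u)) (L (inv u \<otimes> prd (drop R xs)))"
proof (cases "R = 0")
  case True
  then show ?thesis using u by simp
next
  case False
  define cs where "cs = take R xs"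
  define ds where "ds = drop R xs"
  have xs_eq: "xs = cs @ ds" unfolding cs_def ds_def by simp
  have lc: "length cs = R" and ld: "length ds = R" using xs(2) unfolding cs_def ds_def by auto
  have ne: "cs \<noteq> []" "ds \<noteq> []" using lc ld False by auto
  have acs: "alt0 cs" and ads: "alt0 ds" and j: "PP (last cs) (hd ds)"
    using xs(1) alt0_append[of cs ds] xs_eq ne by auto
  have csc: "set cs \<subseteq> carrier G" and dsc: "set ds \<subseteq> carrier G" using acs ads alt0_car by auto
  obtain s where s: "Alt u s" using Alt_exists u by blast
  have Lu: "L u = s" using L_eq s by simp
  from s consider (z) "s = 0" "u \<in> C" | (n) us where "alt0 us" "us \<noteq> []" "length us = s" "u = prd us"
    unfolding Alt_def by blast
  then show ?thesis
  proof cases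
    case z
    have "L (prd cs \<otimes> u) = L (prd cs)" using L_Cr z prd_car csc by blast
    also have "\<dots> = R" using L_alt0 acs lc by simp
    finally show ?thesis using Lu z unfolding cs_def by simp
  next
    case n
    have usc: "set us \<subseteq> carrier G" using n alt0_car by blast
    show ?thesis
    proof (cases "PP (last cs) (hd us)")
      case True
      then have "alt0 (cs @ us)" using alt0_append acs n by blast
      then have "L (prd (cs @ us)) = R + s" using L_alt0 lc n by simp
      moreover have "prd (cs @ us) = prd cs \<otimes> u" using prd_append[OF csc usc] n by simp
      ultimately show ?thesis using Lu unfolding cs_def by simp
    next
      case False
      define vs where "vs = rev (map (\<lambda>x. inv x) us)"
      have avs: "alt0 vs" using alt0_inv n unfolding vs_def by blast
      have lv: "last vs = inv (hd us)" using last_rev_inv n unfolding vs_def by blast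
      have hc: "hd us \<in> carrier G" using usc n by auto
      have "PP (inv (hd us)) (hd ds)" using False j inv_A_iff[OF hc] unfolding PP_def by blast
      then have "alt0 (vs @ ds)" using alt0_append avs ads lv by auto
      then have "L (prd (vs @ ds)) = s + R" using L_alt0 ld n unfolding vs_def by simp
      moreover have "prd (vs @ ds) = inv u \<otimes> prd ds"
        using prd_append[OF _ dsc, of vs] usc n prd_inv unfolding vs_def by auto
      ultimately show ?thesis using Lu unfolding ds_def by simp
    qed
  qed
qed

lemma odd_core:
  assumes xs: "alt0 xs" "length xs = 2*R+1" and u: "u \<in> carrier G"
    and XX: "XX = (if xs!R \<in> A then A else B)"
  shows "\<exists>x\<in>XX. L (x \<otimes> u) + R + 1 \<le>
     max (L (prd (take R xs) \<otimes> u)) (L (inv u \<otimes> (xs!R \<otimes> prd (drop (Suc R) xs))))"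
proof -
  define gs where "gs = take R xs"
  define x' where "x' = xs!R"
  define ds where "ds = drop (Suc R) xs"
  have xs_eq: "xs = gs @ x' # ds" unfolding gs_def ds_def x'_def using xs(2)
    by (simp add: id_take_nth_drop)
  have lg: "length gs = R" and ld: "length ds = R" using xs(2) unfolding gs_def ds_def by auto
  have ags: "alt0 gs" and axd: "alt0 (x' # ds)" and j: "gs = [] \<or> PP (last gs) x'"
    using xs(1) alt0_append[of gs "x' # ds"] xs_eq by auto
  have x': "x' \<in> (A \<union> B) - C" and ads: "alt0 ds" using axd alt0_Cons by auto
  have x'c: "x' \<in> carrier G" using x' AB_car by blast
  have gsc: "set gs \<subseteq> carrier G" and dsc: "set ds \<subseteq> carrier G" using ags ads alt0_car by auto
  have subX: "subgroup XX G" using XX subA subB by auto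
  have CX: "C \<subseteq> XX" using XX C_A C_B by auto
  have x'X: "x' \<in> XX" using XX x' unfolding x'_def by auto
  have dc: "prd ds \<in> carrier G" using dsc prd_car by blast
  obtain s where s: "Alt u s" using Alt_exists u by blast
  have Lu: "L u = s" using L_eq s by simp
  from s consider (z) "s = 0" "u \<in> C" | (n) us where "alt0 us" "us \<noteq> []" "length us = s" "u = prd us"
    unfolding Alt_def by blast
  then show ?thesis
  proof cases
    case z
    have iu: "inv u \<in> C" using inv_C z by blast
    have "alt0 ((inv u \<otimes> x') # ds)" using alt0_Cmul[OF iu axd] .
    then have "L (prd ((inv u \<otimes> x') # ds)) = length ((inv u \<otimes> x') # ds)" by (rule L_alt0)
    then have "L (prd ((inv u \<otimes> x') # ds)) = R + 1" using ld by simp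
    moreover have "prd ((inv u \<otimes> x') # ds) = inv u \<otimes> (x' \<otimes> prd ds)"
      using u x'c dc by (simp add: m_assoc)
    moreover have "L (inv u \<otimes> u) = 0" using u L_zero_iff one_C by simp
    ultimately show ?thesis using iu CX unfolding x'_def ds_def gs_def by (intro bexI[of _ "inv u"]) auto
  next
    case n
    have usc: "set us \<subseteq> carrier G" using n alt0_car by blast
    obtain y ys where us: "us = y # ys" using n by (cases us) auto
    have y: "y \<in> (A \<union> B) - C" and ays: "alt0 ys" and jy: "ys = [] \<or> PP y (hd ys)" using n us alt0_Cons by auto
    have yc: "y \<in> carrier G" using y AB_car by blast
    have ysc: "set ys \<subseteq> carrier G" using ays alt0_car by blast
    show ?thesis
    proof (cases "y \<in> A \<longleftrightarrow> x' \<in> A")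
      case True
      have yX: "y \<in> XX" using XX True y unfolding x'_def by auto
      have iyX: "inv y \<in> XX" using subgroup.m_inv_closed[OF subX yX] .
      have "inv y \<otimes> u = prd ys" using n us yc ysc prd_car by (simp add: m_assoc[symmetric])
      then have L1: "L (inv y \<otimes> u) = s - 1" using L_alt0[OF ays] n us by simp
      have "gs = [] \<or> PP (last gs) y" using j True unfolding PP_def by auto
      then have "alt0 (gs @ us)" using alt0_append ags n us by auto
      then have "L (prd (gs @ us)) = R + s" using L_alt0 lg n by simp
      moreover have "prd (gs @ us) = prd gs \<otimes> u" using prd_append[OF gsc usc] n by simp
      ultimately have "L (prd gs \<otimes> u) = R + s" by simp
      moreover have "s - 1 + R + 1 \<le> R + s" using n by (cases s) auto
      ultimately show ?thesis using L1 iyX unfolding gs_def by (intro bexI[of _ "inv y"]) (simp add: max_def)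
    next
      case False
      define vs where "vs = rev (map (\<lambda>x. inv x) us)"
      have avs: "alt0 vs" using alt0_inv n unfolding vs_def by blast
      have lv: "last vs = inv y" using last_rev_inv n us unfolding vs_def by auto
      have vsc: "set vs \<subseteq> carrier G" using usc unfolding vs_def by auto
      have "PP (inv y) x'" using False inv_A_iff[OF yc] unfolding PP_def by blast
      then have "alt0 (vs @ x' # ds)" using alt0_append avs axd lv by auto
      then have "L (prd (vs @ x' # ds)) = s + R + 1" using L_alt0 ld n unfolding vs_def by simp
      moreover have "prd (vs @ x' # ds) = inv u \<otimes> (x' \<otimes> prd ds)"
        using prd_append[OF vsc, of "x' # ds"] dsc x'c n prd_inv[OF usc] unfolding vs_def by auto
      moreover have "L (\<one> \<otimes> u) = s" using Lu u by simp
      moreover have "\<one> \<in> XX" using subgroup.one_closed[OF subX] .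
      ultimately show ?thesis unfolding x'_def ds_def by (intro bexI[of _ "\<one>"]) auto
    qed
  qed
qed


theorem fixed_point:
  assumes H: "subgroup H G" "finite H"
  shows "\<exists>g\<in>carrier G. (\<forall>h\<in>H. inv g \<otimes> h \<otimes> g \<in> A) \<or> (\<forall>h\<in>H. inv g \<otimes> h \<otimes> g \<in> B)"
proof -
  have Hc: "H \<subseteq> carrier G" by (rule subgroup.subset[OF H(1)])
  have Hm: "\<And>a b. a \<in> H \<Longrightarrow> b \<in> H \<Longrightarrow> a \<otimes> b \<in> H" by (rule subgroup.m_closed[OF H(1)])
  have Hi: "\<And>a. a \<in> H \<Longrightarrow> inv a \<in> H" by (rule subgroup.m_inv_closed[OF H(1)])
  have H1: "\<one> \<in> H" by (rule subgroup.one_closed[OF H(1)])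
  then have Hne: "H \<noteq> {}" by blast
  define D where "D = Max (L ` H)"
  have fin: "finite (L ` H)" using H(2) by blast
  have LD: "\<And>h. h \<in> H \<Longrightarrow> L h \<le> D" unfolding D_def using Max_ge[OF fin] by blast
  have "D \<in> L ` H" unfolding D_def using Max_in[OF fin] Hne by blast
  then obtain k where k: "k \<in> H" "L k = D" by blast
  have kc: "k \<in> carrier G" using k Hc by blast
  show ?thesis
  proof (cases "D = 0")
    case True
    have "\<forall>h\<in>H. inv \<one> \<otimes> h \<otimes> \<one> \<in> A"
    proof
      fix h assume h: "h \<in> H"
      then have hc: "h \<in> carrier G" using Hc by blast
      have "L h = 0" using LD[OF h] True by simp
      then have "h \<in> C" using L_zero_iff[OF hc] by simp
      then show "inv \<one> \<otimes> h \<otimes> \<one> \<in> A" using C_A hc by auto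
    qed
    then show ?thesis by blast
  next
    case False
    have "Alt k D" using Alt_L[OF kc] k(2) by simp
    then obtain xs where xs: "alt0 xs" "length xs = D" "k = prd xs"
      using False unfolding Alt_def by blast
    have xsc: "set xs \<subseteq> carrier G" using alt0_car xs by blast
    define R where "R = D div 2"
    consider (ev) "D = 2 * R" | (od) "D = 2 * R + 1" unfolding R_def by linarith
    then show ?thesis
    proof cases
      case ev
      define c where "c = prd (take R xs)"
      define d where "d = prd (drop R xs)"
      have cc: "c \<in> carrier G" unfolding c_def using xsc prd_car set_take_subset by (metis subset_trans)
      have dc: "d \<in> carrier G" unfolding d_def using xsc prd_car set_drop_subset by (metis subset_trans)
      have kcd: "k = c \<otimes> d" unfolding c_def d_def using xs(3) prd_append[of "take R xs" "drop R xs"]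
          xsc set_take_subset set_drop_subset by (metis append_take_drop_id subset_trans)
      have star: "L (inv z \<otimes> c) + R \<le> max (L z) (L (inv z \<otimes> k))" if z: "z \<in> carrier G" for z
      proof -
        define u where "u = inv c \<otimes> z"
        have uc: "u \<in> carrier G" unfolding u_def using cc z by simp
        have e1: "c \<otimes> u = z" unfolding u_def using cc z by (simp add: m_assoc[symmetric])
        have e2: "inv u = inv z \<otimes> c" unfolding u_def using cc z by (simp add: inv_mult_group)
        have e3: "inv u \<otimes> d = inv z \<otimes> k" using e2 kcd cc dc z by (simp add: m_assoc)
        have "L u + R \<le> max (L (c \<otimes> u)) (L (inv u \<otimes> d))"
          using even_core[OF xs(1) _ uc, of R] xs(2) ev unfolding c_def d_def by simp
        moreover have "L u = L (inv z \<otimes> c)" using L_inv[OF uc] e2 by simp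
        ultimately show ?thesis using e1 e3 by simp
      qed
      have bound: "L (inv h \<otimes> c) \<le> R" if h: "h \<in> H" for h
      proof -
        have "L h \<le> D" "L (inv h \<otimes> k) \<le> D" using LD h k(1) Hm Hi by auto
        then show ?thesis using star[of h] h Hc ev by auto
      qed
      have "inv c \<otimes> h \<otimes> c \<in> A" if h: "h \<in> H" for h
      proof -
        have hc: "h \<in> carrier G" using h Hc by blast
        define z where "z = inv h \<otimes> c"
        have zc: "z \<in> carrier G" unfolding z_def using hc cc by simp
        have iz: "inv z = inv c \<otimes> h" unfolding z_def using hc cc by (simp add: inv_mult_group)
        have "inv z \<otimes> k = inv (inv (h \<otimes> k) \<otimes> c)" using iz hc cc kc by (simp add: inv_mult_group m_assoc)
        then have "L (inv z \<otimes> k) = L (inv (h \<otimes> k) \<otimes> c)" using L_inv hc kc cc by simp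
        also have "\<dots> \<le> R" using bound Hm h k(1) by blast
        finally have a1: "L (inv z \<otimes> k) \<le> R" .
        have a2: "L z \<le> R" using bound h unfolding z_def by blast
        have "L (inv z \<otimes> c) + R \<le> R" using star[OF zc] a1 a2 by simp
        then have "L (inv c \<otimes> h \<otimes> c) = 0" using iz by simp
        then show ?thesis using L_zero_iff C_A cc hc by auto
      qed
      then show ?thesis using cc by blast
    next
      case od
      define g where "g = prd (take R xs)"
      define x' where "x' = xs ! R"
      define d where "d = prd (drop (Suc R) xs)"
      define XX where "XX = (if xs!R \<in> A then A else B)"
      have Rl: "R < length xs" using od xs(2) by simp
      have gc: "g \<in> carrier G" unfolding g_def using xsc prd_car set_take_subset by (metis subset_trans)
      have dc: "d \<in> carrier G" unfolding d_def using xsc prd_car set_drop_subset by (metis subset_trans)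
      have x'c: "x' \<in> carrier G" unfolding x'_def using xsc Rl by auto
      have subX: "subgroup XX G" using XX_def subA subB by auto
      have XXAB: "XX \<subseteq> A \<union> B" unfolding XX_def by auto
      have CX: "C \<subseteq> XX" using XX_def C_A C_B by auto
      have kcd: "k = g \<otimes> (x' \<otimes> d)"
      proof -
        have "xs = take R xs @ x' # drop (Suc R) xs" unfolding x'_def using Rl by (simp add: id_take_nth_drop)
        then have "prd xs = g \<otimes> prd (x' # drop (Suc R) xs)" unfolding g_def
          using prd_append[of "take R xs" "x' # drop (Suc R) xs"] xsc set_take_subset set_drop_subset x'c
          by (metis (no_types, lifting) insert_subset list.simps(15) subset_trans)
        then show ?thesis using xs(3) d_def by simp
      qed
      have star: "\<exists>x\<in>XX. L (x \<otimes> (inv g \<otimes> z)) + R + 1 \<le> max (L z) (L (inv z \<otimes> k))"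
        if z: "z \<in> carrier G" for z
      proof -
        define u where "u = inv g \<otimes> z"
        have uc: "u \<in> carrier G" unfolding u_def using gc z by simp
        have e1: "g \<otimes> u = z" unfolding u_def using gc z by (simp add: m_assoc[symmetric])
        have e2: "inv u = inv z \<otimes> g" unfolding u_def using gc z by (simp add: inv_mult_group)
        have e3: "inv u \<otimes> (x' \<otimes> d) = inv z \<otimes> k" using e2 kcd gc dc x'c z by (simp add: m_assoc)
        obtain x where "x \<in> XX" "L (x \<otimes> u) + R + 1 \<le> max (L (g \<otimes> u)) (L (inv u \<otimes> (x' \<otimes> d)))"
          using odd_core[OF xs(1) _ uc XX_def] xs(2) od unfolding g_def d_def x'_def by auto
        then show ?thesis using e1 e3 unfolding u_def by auto
      qed
      have bound: "L (inv g \<otimes> h) \<le> R + 1" if h: "h \<in> H" for h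
      proof -
        have hc: "h \<in> carrier G" using h Hc by blast
        have "L h \<le> D" "L (inv h \<otimes> k) \<le> D" using LD h k(1) Hm Hi by auto
        then obtain x where x: "x \<in> XX" "L (x \<otimes> (inv g \<otimes> h)) \<le> R" using star[OF hc] od by fastforce
        have xc: "x \<in> carrier G" using subgroup.subset[OF subX] x(1) by blast
        have "inv x \<in> A \<union> B" using subgroup.m_inv_closed[OF subX x(1)] XXAB by blast
        then have "L (inv x \<otimes> (x \<otimes> (inv g \<otimes> h))) \<le> L (x \<otimes> (inv g \<otimes> h)) + 1"
          using L_step xc gc hc by simp
        moreover have "inv x \<otimes> (x \<otimes> (inv g \<otimes> h)) = inv g \<otimes> h" using xc gc hc by (simp add: m_assoc[symmetric])
        ultimately show ?thesis using x(2) by simp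
      qed
      have conj_inv: "inv g \<otimes> inv h \<otimes> g \<in> XX" if h: "h \<in> H" for h
      proof -
        have hc: "h \<in> carrier G" using h Hc by blast
        define z where "z = inv h \<otimes> g"
        have zc: "z \<in> carrier G" unfolding z_def using hc gc by simp
        have iz: "inv z = inv g \<otimes> h" unfolding z_def using hc gc by (simp add: inv_mult_group)
        have a1: "L (inv z \<otimes> k) \<le> R + 1" using bound[of "h \<otimes> k"] Hm h k(1) iz hc gc kc by (simp add: m_assoc)
        have "L z = L (inv z)" using L_inv zc by simp
        then have a2: "L z \<le> R + 1" using bound h iz by simp
        obtain x where x: "x \<in> XX" "L (x \<otimes> (inv g \<otimes> z)) + R + 1 \<le> max (L z) (L (inv z \<otimes> k))"
          using star[OF zc] by blast
        have w: "inv g \<otimes> z = inv g \<otimes> inv h \<otimes> g" unfolding z_def using gc hc by (simp add: m_assoc)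
        have wc: "inv g \<otimes> z \<in> carrier G" using gc zc by simp
        have xc: "x \<in> carrier G" using subgroup.subset[OF subX] x(1) by blast
        have "L (x \<otimes> (inv g \<otimes> z)) = 0" using x(2) a1 a2 by simp
        then have "x \<otimes> (inv g \<otimes> z) \<in> XX" using L_zero_iff xc wc CX by auto
        then have "inv g \<otimes> z \<in> XX" using mult_in_iff_l[OF subX x(1) wc] by blast
        then show ?thesis using w by simp
      qed
      have "\<forall>h\<in>H. inv g \<otimes> h \<otimes> g \<in> XX"
      proof
        fix h assume "h \<in> H"
        then have "inv g \<otimes> inv (inv h) \<otimes> g \<in> XX" using conj_inv Hi by blast
        then show "inv g \<otimes> h \<otimes> g \<in> XX" using \<open>h \<in> H\<close> Hc by auto
      qed
      then show ?thesis using gc XX_def by (cases "xs!R \<in> A") auto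
    qed
  qed
qed

end

lemma funpow_mult_fix:
  assumes "(f ^^ d) y = y"
  shows "(f ^^ (d * m)) y = y"
proof (induction m)
  case 0 then show ?case by simp
next
  case (Suc m)
  have "f ^^ (d * Suc m) = f ^^ d \<circ> f ^^ (d * m)" by (simp add: funpow_add[symmetric] add.commute)
  then show ?case using Suc assms by simp
qed

lemma funpow_mod:
  assumes "(f ^^ p) y = y"
  shows "(f ^^ n) y = (f ^^ (n mod p)) y"
proof -
  have "n = n mod p + p * (n div p)" by simp
  then have "f ^^ n = f ^^ (n mod p) \<circ> f ^^ (p * (n div p))" by (metis funpow_add)
  then show ?thesis using funpow_mult_fix[OF assms] by simp
qed

lemma perm_fixed:
  assumes "finite S" "f ` S \<subseteq> S" "\<forall>y\<in>S. (f ^^ p) y = y" "Factorial_Ring.prime (p::nat)" "\<not> p dvd card S"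
  shows "\<exists>y\<in>S. f y = y"
  using assms
proof (induction "card S" arbitrary: S rule: less_induct)
  case less
  show ?case
  proof (rule ccontr)
    assume nf: "\<not> (\<exists>y\<in>S. f y = y)"
    have p0: "p > 1" using less.prems(4) prime_gt_1_nat by blast
    have "S \<noteq> {}" using less.prems(5) by auto
    then obtain y where y: "y \<in> S" by blast
    have inS: "(f ^^ i) z \<in> S" if "z \<in> S" for i z
      using that less.prems(2) by (induction i) auto
    have per: "(f ^^ p) y = y" using less.prems(3) y by blast
    define Orb where "Orb = (\<lambda>i. (f ^^ i) y) ` {..<p}"
    have inj: "inj_on (\<lambda>i. (f ^^ i) y) {..<p}"
    proof (rule inj_onI, rule ccontr)
      fix i j assume i: "i \<in> {..<p}" and j: "j \<in> {..<p}" and e: "(f ^^ i) y = (f ^^ j) y" and ne: "i \<noteq> j"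
      have key: "\<exists>d. 0 < d \<and> d < p \<and> (f ^^ d) y = y"
        if ij: "i < j" "j < p" "(f ^^ i) y = (f ^^ j) y" for i j
      proof -
        have "(f ^^ (p - i)) ((f ^^ i) y) = (f ^^ (p - i + i)) y" by (simp add: funpow_add)
        also have "p - i + i = p" using ij by simp
        finally have a: "(f ^^ (p - i)) ((f ^^ i) y) = y" using per by simp
        have "(f ^^ (p - i)) ((f ^^ j) y) = (f ^^ (p - i + j)) y" by (simp add: funpow_add)
        also have "\<dots> = (f ^^ ((p - i + j) mod p)) y" using funpow_mod[OF per] by blast
        also have "(p - i + j) mod p = j - i"
        proof -
          have "p - i + j = (j - i) + p" using ij by simp
          moreover have "j - i < p" using ij by simp
          ultimately show ?thesis by simp
        qed
        finally have "(f ^^ (j - i)) y = y" using a ij by simp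
        then show ?thesis using ij by (intro exI[of _ "j - i"]) auto
      qed
      obtain d where d: "0 < d" "d < p" "(f ^^ d) y = y"
        using key[of i j] key[of j i] i j e ne by (cases "i < j") auto
      have "\<not> p dvd d" using d by (meson dvd_imp_le not_le)
      then have "coprime p d" using less.prems(4) prime_imp_coprime by blast
      then have "coprime d p" by (simp add: coprime_commute)
      then have "gcd d p = 1" by simp
      then obtain m k where mk: "d * m = p * k + 1" using bezout_nat[of d p] d by auto
      have "(f ^^ (d * m)) y = y" using funpow_mult_fix[OF d(3)] .
      moreover have "(f ^^ (d * m)) y = (f ^^ ((d * m) mod p)) y" using funpow_mod[OF per] by blast
      moreover have "(d * m) mod p = 1"
      proof -
        have "(p * k + 1) mod p = 1 mod p" by (metis mod_mult_self3 add.commute mult.commute)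
        then show ?thesis using mk p0 by simp
      qed
      ultimately have "f y = y" by simp
      then show False using nf y by blast
    qed
    have cO: "card Orb = p" unfolding Orb_def using card_image[OF inj] by simp
    have OS: "Orb \<subseteq> S" unfolding Orb_def using inS y by auto
    define S' where "S' = S - Orb"
    have fin': "finite S'" using less.prems(1) unfolding S'_def by blast
    have img': "f ` S' \<subseteq> S'"
    proof
      fix w assume "w \<in> f ` S'"
      then obtain z where z: "z \<in> S'" "w = f z" by blast
      have zS: "z \<in> S" using z unfolding S'_def by blast
      have "f z \<in> S" using zS less.prems(2) by blast
      moreover have "f z \<notin> Orb"
      proof
        assume "f z \<in> Orb"
        then obtain i where i: "i < p" "f z = (f ^^ i) y" unfolding Orb_def by blast
        have "z = (f ^^ p) z" using less.prems(3) zS by simp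
        also have "p = (p - 1) + 1" using p0 by simp
        also have "(f ^^ ((p - 1) + 1)) z = (f ^^ (p - 1)) (f z)" by (simp only: funpow_add) simp
        also have "\<dots> = (f ^^ (p - 1 + i)) y" using i by (simp only: funpow_add o_apply)
        also have "\<dots> = (f ^^ ((p - 1 + i) mod p)) y" using funpow_mod[OF per] by blast
        finally have "z \<in> Orb" unfolding Orb_def using p0 by auto
        then show False using z unfolding S'_def by blast
      qed
      ultimately show "w \<in> S'" using z unfolding S'_def by blast
    qed
    have per': "\<forall>y\<in>S'. (f ^^ p) y = y" using less.prems(3) unfolding S'_def by blast
    have fO: "finite Orb" using OS less.prems(1) finite_subset by blast
    have c1: "card S' = card S - card Orb" unfolding S'_def using card_Diff_subset[OF fO OS] .
    have c2: "card Orb \<le> card S" using card_mono[OF less.prems(1) OS] .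
    have cS: "card S = card S' + p" using c1 c2 cO by simp
    have lt: "card S' < card S" using cS p0 by simp
    have nd: "\<not> p dvd card S'" using cS less.prems(5) by auto
    obtain z where "z \<in> S'" "f z = z" using less.hyps[OF lt fin' img' per' less.prems(4) nd] by blast
    then show False using nf unfolding S'_def by blast
  qed
qed

context group begin

lemma gcancel1 [simp]: "x \<in> carrier G \<Longrightarrow> y \<in> carrier G \<Longrightarrow> x \<otimes> (inv x \<otimes> y) = y"
  by (simp add: m_assoc[symmetric])
lemma gcancel2 [simp]: "x \<in> carrier G \<Longrightarrow> y \<in> carrier G \<Longrightarrow> inv x \<otimes> (x \<otimes> y) = y"
  by (simp add: m_assoc[symmetric])

lemma pow_card_one:
  assumes K: "subgroup K G" "finite K" and x: "x \<in> K"
  shows "x [^] card K = \<one>"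
proof -
  interpret KG: group "G\<lparr>carrier := K\<rparr>" by (rule subgroup_imp_group[OF K(1)])
  have "x [^]\<^bsub>G\<lparr>carrier := K\<rparr>\<^esub> order (G\<lparr>carrier := K\<rparr>) = \<one>\<^bsub>G\<lparr>carrier := K\<rparr>\<^esub>"
    using KG.pow_order_eq_1 x by simp
  then show ?thesis using nat_pow_consistent[of x "card K" K] unfolding order_def by simp
qed

lemma pow_coprime_one:
  assumes x: "x \<in> carrier G" and a: "x [^] (a::nat) = \<one>" and b: "x [^] (b::nat) = \<one>" and ab: "coprime a b"
  shows "x = \<one>"
proof -
  have "ord x dvd a" "ord x dvd b" using a b pow_eq_id x by auto
  then have "ord x dvd gcd a b" by simp
  then have "ord x = 1" using ab by simp
  then show ?thesis using ord_eq_1 x by simp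
qed

lemma conj_subgroup:
  assumes H: "subgroup H G" and g: "g \<in> carrier G"
  shows "subgroup ((\<lambda>h. inv g \<otimes> h \<otimes> g) ` H) G"
proof -
  have Hc: "H \<subseteq> carrier G" by (rule subgroup.subset[OF H])
  show ?thesis
  proof
    show "(\<lambda>h. inv g \<otimes> h \<otimes> g) ` H \<subseteq> carrier G" using Hc g by auto
  next
    fix x y assume "x \<in> (\<lambda>h. inv g \<otimes> h \<otimes> g) ` H" "y \<in> (\<lambda>h. inv g \<otimes> h \<otimes> g) ` H"
    then obtain a b where ab: "a \<in> H" "b \<in> H" "x = inv g \<otimes> a \<otimes> g" "y = inv g \<otimes> b \<otimes> g" by blast
    have ac: "a \<in> carrier G" "b \<in> carrier G" using ab Hc by auto
    have "x \<otimes> y = inv g \<otimes> (a \<otimes> b) \<otimes> g" using ab ac g by (simp add: m_assoc)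
    moreover have "a \<otimes> b \<in> H" using subgroup.m_closed[OF H ab(1) ab(2)] .
    ultimately show "x \<otimes> y \<in> (\<lambda>h. inv g \<otimes> h \<otimes> g) ` H" by blast
  next
    have "\<one> = inv g \<otimes> \<one> \<otimes> g" using g by simp
    then show "\<one> \<in> (\<lambda>h. inv g \<otimes> h \<otimes> g) ` H" using subgroup.one_closed[OF H] by blast
  next
    fix x assume "x \<in> (\<lambda>h. inv g \<otimes> h \<otimes> g) ` H"
    then obtain a where a: "a \<in> H" "x = inv g \<otimes> a \<otimes> g" by blast
    have ac: "a \<in> carrier G" using a Hc by auto
    have "inv x = inv g \<otimes> inv a \<otimes> g" using a ac g by (simp add: inv_mult_group m_assoc)
    moreover have "inv a \<in> H" using subgroup.m_inv_closed[OF H a(1)] .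
    ultimately show "inv x \<in> (\<lambda>h. inv g \<otimes> h \<otimes> g) ` H" by blast
  qed
qed

lemma conj_card:
  assumes H: "H \<subseteq> carrier G" and g: "g \<in> carrier G"
  shows "card ((\<lambda>h. inv g \<otimes> h \<otimes> g) ` H) = card H"
proof (rule card_image, rule inj_onI)
  fix a b assume ab: "a \<in> H" "b \<in> H" and e: "inv g \<otimes> a \<otimes> g = inv g \<otimes> b \<otimes> g"
  have c: "a \<in> carrier G" "b \<in> carrier G" using ab H by auto
  have "a = g \<otimes> (inv g \<otimes> a \<otimes> g) \<otimes> inv g" using c g by (simp add: m_assoc)
  also have "\<dots> = g \<otimes> (inv g \<otimes> b \<otimes> g) \<otimes> inv g" using e by simp
  also have "\<dots> = b" using c g by (simp add: m_assoc)
  finally show "a = b" .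
qed

end

locale semi = group G for G (structure) +
  fixes N :: "'a set" and t :: 'a and r s :: nat and M :: "'a set"
  assumes N: "subgroup N G" "finite N" and cardN: "\<exists>a. card N = r ^ a"
    and rp: "Factorial_Ring.prime r" and sp: "Factorial_Ring.prime s" and rs: "r \<noteq> s"
    and t: "t \<in> carrier G" and ordt: "ord t = s" and norm: "conj_by G t ` N = N"
    and inter: "N \<inter> generate G {t} = {\<one>}"
    and Mdef: "M = N <#> generate G {t}" and subM: "subgroup M G"
begin

abbreviation "T \<equiv> generate G {t}"

lemma subT: "subgroup T G" using generate_is_subgroup t by simp
lemma Tc: "T \<subseteq> carrier G" by (rule subgroup.subset[OF subT])
lemma Nc: "N \<subseteq> carrier G" by (rule subgroup.subset[OF N(1)])
lemma cardT: "card T = s" using generate_pow_card[OF t] ordt by simp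
lemma finT: "finite T"
proof -
  have "card T > 0" using cardT prime_gt_0_nat[OF sp] by simp
  then show ?thesis using card_gt_0_iff by blast
qed

lemma NM: "N \<subseteq> M"
proof
  fix y assume y: "y \<in> N"
  have "y = y \<otimes> \<one>" using y Nc by auto
  moreover have "\<one> \<in> T" using subgroup.one_closed[OF subT] .
  ultimately show "y \<in> M" unfolding Mdef set_mult_def using y by blast
qed

lemma Mdec: "w \<in> M \<Longrightarrow> \<exists>y\<in>N. \<exists>\<sigma>\<in>T. w = y \<otimes> \<sigma>"
  unfolding Mdef set_mult_def by blast

lemma dec_unique:
  assumes "y1 \<in> N" "y2 \<in> N" "\<sigma>1 \<in> T" "\<sigma>2 \<in> T" "y1 \<otimes> \<sigma>1 = y2 \<otimes> \<sigma>2"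
  shows "y1 = y2 \<and> \<sigma>1 = \<sigma>2"
proof -
  have c: "y1 \<in> carrier G" "y2 \<in> carrier G" "\<sigma>1 \<in> carrier G" "\<sigma>2 \<in> carrier G"
    using assms Nc Tc by auto
  have e: "inv y2 \<otimes> y1 = \<sigma>2 \<otimes> inv \<sigma>1"
  proof -
    have "inv y2 \<otimes> y1 = inv y2 \<otimes> (y1 \<otimes> \<sigma>1) \<otimes> inv \<sigma>1" using c by (simp add: m_assoc)
    also have "\<dots> = inv y2 \<otimes> (y2 \<otimes> \<sigma>2) \<otimes> inv \<sigma>1" using assms(5) by simp
    also have "\<dots> = \<sigma>2 \<otimes> inv \<sigma>1" using c by (simp add: m_assoc[symmetric])
    finally show ?thesis .
  qed
  have "inv y2 \<otimes> y1 \<in> N" using subgroup.m_closed[OF N(1) subgroup.m_inv_closed[OF N(1) assms(2)] assms(1)] .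
  moreover have "\<sigma>2 \<otimes> inv \<sigma>1 \<in> T" using subgroup.m_closed[OF subT assms(4) subgroup.m_inv_closed[OF subT assms(3)]] .
  ultimately have "inv y2 \<otimes> y1 = \<one>" using e inter by auto
  then have "y2 \<otimes> (inv y2 \<otimes> y1) = y2" using c by simp
  then have "y1 = y2" using c by simp
  moreover then have "\<sigma>1 = \<sigma>2" using assms(5) c by simp
  ultimately show ?thesis by blast
qed

lemma conjT: "\<sigma> \<in> T \<Longrightarrow> y \<in> N \<Longrightarrow> \<sigma> \<otimes> y \<otimes> inv \<sigma> \<in> N"
proof (induction arbitrary: y rule: generate.induct)
  case one then show ?case using Nc by auto
next
  case (incl h)
  then have "h = t" by simp
  then show ?case using norm incl unfolding conj_by_def by blast
next
  case (inv h)
  then have h: "h = t" by simp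
  obtain y' where y': "y' \<in> N" "y = t \<otimes> y' \<otimes> inv t" using norm inv.prems unfolding conj_by_def by blast
  have y'c: "y' \<in> carrier G" using y' Nc by auto
  have "inv t \<otimes> y \<otimes> inv (inv t) = y'" using y' t y'c by (simp add: m_assoc)
  then show ?case using h y' by simp
next
  case (eng h1 h2)
  have c: "h1 \<in> carrier G" "h2 \<in> carrier G" using eng.hyps Tc by auto
  have yc: "y \<in> carrier G" using eng.prems Nc by auto
  have "h1 \<otimes> h2 \<otimes> y \<otimes> inv (h1 \<otimes> h2) = h1 \<otimes> (h2 \<otimes> y \<otimes> inv h2) \<otimes> inv h1"
    using c yc by (simp add: m_assoc inv_mult_group)
  then show ?case using eng.IH eng.prems by simp
qed

lemma coprime_rs: "coprime (r ^ a) (s ^ b)"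
  using primes_coprime[OF rp sp rs] by simp


lemma sub_pow_closed: "subgroup H G \<Longrightarrow> h \<in> H \<Longrightarrow> h [^] (n::nat) \<in> H"
  by (induction n) (auto intro: subgroup.m_closed subgroup.one_closed)

lemma not_s_dvd_N: "\<not> s dvd card N"
proof
  assume "s dvd card N"
  then obtain a where "s dvd r ^ a" using cardN by auto
  then have "s dvd r" using prime_dvd_power[OF sp] by blast
  then show False using primes_dvd_imp_eq[OF sp rp] rs by auto
qed

lemma sub_N:
  assumes K: "subgroup K G" "finite K" "K \<subseteq> M" "\<exists>k. card K = r ^ k"
  shows "K \<subseteq> N"
proof
  fix x assume x: "x \<in> K"
  obtain y \<sigma> where y: "y \<in> N" "\<sigma> \<in> T" "x = y \<otimes> \<sigma>" using Mdec x K(3) by blast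
  have yc: "y \<in> carrier G" and sc: "\<sigma> \<in> carrier G" using y Nc Tc by auto
  have pw: "\<exists>y'\<in>N. x [^] n = y' \<otimes> \<sigma> [^] n" for n :: nat
  proof (induction n)
    case 0
    then show ?case using subgroup.one_closed[OF N(1)] by (intro bexI[of _ \<one>]) auto
  next
    case (Suc n)
    then obtain y' where y': "y' \<in> N" "x [^] n = y' \<otimes> \<sigma> [^] n" by blast
    have y'c: "y' \<in> carrier G" using y' Nc by auto
    have sn: "\<sigma> [^] n \<in> T" using sub_pow_closed[OF subT y(2)] .
    have snc: "\<sigma> [^] n \<in> carrier G" using sc by simp
    define m where "m = \<sigma> [^] n \<otimes> y \<otimes> inv (\<sigma> [^] n)"
    have mN: "m \<in> N" unfolding m_def using conjT[OF sn y(1)] .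
    have "x [^] Suc n = y' \<otimes> \<sigma> [^] n \<otimes> (y \<otimes> \<sigma>)" using y'(2) y(3) by simp
    also have "\<dots> = (y' \<otimes> m) \<otimes> (\<sigma> [^] n \<otimes> \<sigma>)" unfolding m_def using y'c snc yc sc by (simp add: m_assoc)
    also have "\<dots> = (y' \<otimes> m) \<otimes> \<sigma> [^] Suc n" by simp
    finally show ?case using subgroup.m_closed[OF N(1) y'(1) mN] by blast
  qed
  obtain k where k: "card K = r ^ k" using K(4) by blast
  obtain y' where y': "y' \<in> N" "x [^] card K = y' \<otimes> \<sigma> [^] card K" using pw by blast
  have "x [^] card K = \<one>" using pow_card_one[OF K(1) K(2) x] .
  then have "y' \<otimes> \<sigma> [^] card K = \<one> \<otimes> \<one>" using y' by simp
  then have s1: "\<sigma> [^] card K = \<one>"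
    using dec_unique[OF y'(1) subgroup.one_closed[OF N(1)] sub_pow_closed[OF subT y(2)] subgroup.one_closed[OF subT]]
    by blast
  have s2: "\<sigma> [^] s = \<one>" using pow_card_one[OF subT finT y(2)] cardT by simp
  have "coprime (card K) s" using coprime_rs[of k 1] k by simp
  then have "\<sigma> = \<one>" using pow_coprime_one[OF sc s1 s2] by blast
  then show "x \<in> N" using y yc by simp
qed

lemma conj_T:
  assumes K: "subgroup K G" "finite K" "K \<subseteq> M" "\<exists>k. card K = s ^ k"
  shows "\<exists>y\<in>carrier G. \<forall>x\<in>K. inv y \<otimes> x \<otimes> y \<in> T"
proof -
  obtain k where k: "card K = s ^ k" using K(4) by blast
  have Kc: "K \<subseteq> carrier G" by (rule subgroup.subset[OF K(1)])
  obtain a where a: "card N = r ^ a" using cardN by blast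
  have KN: "x = \<one>" if "x \<in> K" "x \<in> N" for x
  proof -
    have "x [^] card K = \<one>" using pow_card_one[OF K(1) K(2)] that by blast
    moreover have "x [^] card N = \<one>" using pow_card_one[OF N(1) N(2)] that by blast
    moreover have "coprime (card K) (card N)" using coprime_rs[of a k] k a by (simp add: coprime_commute)
    ultimately show ?thesis using pow_coprime_one that Kc by blast
  qed
  define pi2 where "pi2 w = (SOME \<sigma>. \<sigma> \<in> T \<and> (\<exists>y\<in>N. w = y \<otimes> \<sigma>))" for w
  have pi2: "pi2 w \<in> T \<and> (\<exists>y\<in>N. w = y \<otimes> pi2 w)" if "w \<in> M" for w
  proof -
    have "\<exists>\<sigma>. \<sigma> \<in> T \<and> (\<exists>y\<in>N. w = y \<otimes> \<sigma>)" using Mdec[OF that] by blast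
    then show ?thesis unfolding pi2_def by (rule someI_ex)
  qed
  have inj: "inj_on pi2 K"
  proof (rule inj_onI)
    fix x1 x2 assume x: "x1 \<in> K" "x2 \<in> K" "pi2 x1 = pi2 x2"
    obtain y1 where y1: "y1 \<in> N" "x1 = y1 \<otimes> pi2 x1" using pi2 x K(3) by blast
    obtain y2 where y2: "y2 \<in> N" "x2 = y2 \<otimes> pi2 x2" using pi2 x K(3) by blast
    have sT: "pi2 x1 \<in> T" using pi2 x K(3) by blast
    have c: "y1 \<in> carrier G" "y2 \<in> carrier G" "pi2 x1 \<in> carrier G" using y1 y2 sT Nc Tc by auto
    have gen: "a \<otimes> inv b = y1 \<otimes> inv y2" if "a = y1 \<otimes> \<tau>" "b = y2 \<otimes> \<tau>" "\<tau> \<in> carrier G" for a b \<tau>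
      using that c by (simp add: inv_mult_group m_assoc)
    have "x1 \<otimes> inv x2 = y1 \<otimes> inv y2" using gen[OF y1(2) _ c(3)] y2(2) x(3) by metis
    moreover have "y1 \<otimes> inv y2 \<in> N" using subgroup.m_closed[OF N(1) y1(1) subgroup.m_inv_closed[OF N(1) y2(1)]] .
    moreover have "x1 \<otimes> inv x2 \<in> K" using subgroup.m_closed[OF K(1) x(1) subgroup.m_inv_closed[OF K(1) x(2)]] .
    ultimately have e: "x1 \<otimes> inv x2 = \<one>" using KN by metis
    have x2c: "x1 \<in> carrier G" "x2 \<in> carrier G" using x Kc by auto
    have "x1 = (x1 \<otimes> inv x2) \<otimes> x2" using x2c by (simp add: m_assoc)
    then show "x1 = x2" using e x2c by simp
  qed
  have "pi2 ` K \<subseteq> T" using pi2 K(3) by blast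
  then have "card K \<le> card T" using card_inj_on_le[OF inj _ finT] by blast
  then have ks: "s ^ k \<le> s" using k cardT by simp
  have s2: "s \<ge> 2" using sp prime_ge_2_nat by blast
  have k1: "k \<le> 1"
  proof (rule ccontr)
    assume "\<not> k \<le> 1"
    then have "s ^ 2 \<le> s ^ k" using s2 by (intro power_increasing) auto
    moreover have "s < s ^ 2" using s2 by (simp add: power2_eq_square)
    ultimately show False using ks by simp
  qed
  show ?thesis
  proof (cases "k = 0")
    case True
    then have "card K = 1" using k by simp
    have "\<forall>x\<in>K. x = \<one>"
    proof
      fix x assume x: "x \<in> K"
      then have "x [^] card K = \<one>" using pow_card_one[OF K(1) K(2)] by blast
      moreover have "x \<in> carrier G" using x Kc by blast
      ultimately show "x = \<one>" using \<open>card K = 1\<close> by simp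
    qed
    then show ?thesis using subgroup.one_closed[OF subT] by (intro bexI[of _ \<one>]) auto
  next
    case False
    then have "k = 1" using k1 by simp
    then have cK: "card K = s" using k by simp
    obtain x where x: "x \<in> K" "x \<noteq> \<one>"
    proof (rule ccontr)
      assume "\<not> thesis"
      then have "K \<subseteq> {\<one>}" using that by blast
      then have "card K \<le> card {\<one>}" by (intro card_mono) auto
      then have "card K \<le> 1" by simp
      then show False using cK s2 by simp
    qed
    have xc: "x \<in> carrier G" using x Kc by auto
    have xs: "x [^] s = \<one>" using pow_card_one[OF K(1) K(2) x(1)] cK by simp
    have "ord x dvd s" using xs pow_eq_id xc by blast
    moreover have "ord x \<noteq> 1" using ord_eq_1 xc x(2) by blast
    ultimately have ordx: "ord x = s" using sp unfolding prime_nat_iff by blast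
    have gK: "generate G {x} = K"
    proof (rule card_subset_eq[OF K(2)])
      show "generate G {x} \<subseteq> K" using generate_subgroup_incl[OF _ K(1)] x by blast
      show "card (generate G {x}) = card K" using generate_pow_card[OF xc] ordx cK by simp
    qed
    define pi1 where "pi1 w = (SOME y. y \<in> N \<and> (\<exists>\<sigma>\<in>T. w = y \<otimes> \<sigma>))" for w
    have pi1: "pi1 w \<in> N \<and> (\<exists>\<sigma>\<in>T. w = pi1 w \<otimes> \<sigma>)" if "w \<in> M" for w
    proof -
      have "\<exists>y. y \<in> N \<and> (\<exists>\<sigma>\<in>T. w = y \<otimes> \<sigma>)" using Mdec[OF that] by blast
      then show ?thesis unfolding pi1_def by (rule someI_ex)
    qed
    define f where "f y = pi1 (x \<otimes> y)" for y
    have xyM: "x \<otimes> y \<in> M" if "y \<in> N" for y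
      using subgroup.m_closed[OF subM] x(1) K(3) NM that by blast
    have fN: "f y \<in> N" and fdec: "\<exists>\<sigma>\<in>T. x \<otimes> y = f y \<otimes> \<sigma>" if "y \<in> N" for y
      using pi1[OF xyM[OF that]] unfolding f_def by auto
    have it: "(f ^^ n) y \<in> N \<and> (\<exists>\<sigma>\<in>T. x [^] n \<otimes> y = (f ^^ n) y \<otimes> \<sigma>)" if y: "y \<in> N" for n :: nat and y
    proof (induction n)
      case 0
      have "y \<in> carrier G" using y Nc by auto
      then show ?case using y subgroup.one_closed[OF subT] by (intro conjI bexI[of _ \<one>]) auto
    next
      case (Suc n)
      then obtain \<sigma> where s: "(f ^^ n) y \<in> N" "\<sigma> \<in> T" "x [^] n \<otimes> y = (f ^^ n) y \<otimes> \<sigma>" by blast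
      obtain \<sigma>' where s': "\<sigma>' \<in> T" "x \<otimes> (f ^^ n) y = f ((f ^^ n) y) \<otimes> \<sigma>'" using fdec[OF s(1)] by blast
      have c: "(f ^^ n) y \<in> carrier G" "\<sigma> \<in> carrier G" "\<sigma>' \<in> carrier G" "f ((f ^^ n) y) \<in> carrier G" "y \<in> carrier G"
        using s s' fN[OF s(1)] Nc Tc y by auto
      have "x [^] Suc n = x \<otimes> x [^] n" by (rule nat_pow_Suc2[OF xc])
      then have "x [^] Suc n \<otimes> y = x \<otimes> (x [^] n \<otimes> y)" using xc c by (simp add: m_assoc)
      also have "\<dots> = (x \<otimes> (f ^^ n) y) \<otimes> \<sigma>" using s(3) xc c by (simp add: m_assoc)
      also have "\<dots> = f ((f ^^ n) y) \<otimes> (\<sigma>' \<otimes> \<sigma>)" using s'(2) c by (simp add: m_assoc)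
      finally have "x [^] Suc n \<otimes> y = (f ^^ Suc n) y \<otimes> (\<sigma>' \<otimes> \<sigma>)" by simp
      moreover have "\<sigma>' \<otimes> \<sigma> \<in> T" using subgroup.m_closed[OF subT s'(1) s(2)] .
      moreover have "(f ^^ Suc n) y \<in> N" using fN[OF s(1)] by simp
      ultimately show ?case by blast
    qed
    have per: "\<forall>y\<in>N. (f ^^ s) y = y"
    proof
      fix y assume y: "y \<in> N"
      obtain \<sigma> where s: "(f ^^ s) y \<in> N" "\<sigma> \<in> T" "x [^] s \<otimes> y = (f ^^ s) y \<otimes> \<sigma>" using it[OF y] by blast
      have "y \<in> carrier G" using y Nc by auto
      then have "(f ^^ s) y \<otimes> \<sigma> = y \<otimes> \<one>" using s(3) xs by simp
      then show "(f ^^ s) y = y" using dec_unique[OF s(1) y s(2) subgroup.one_closed[OF subT]] by blast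
    qed
    have fimg: "f ` N \<subseteq> N" using fN by blast
    obtain y where y: "y \<in> N" "f y = y" using perm_fixed[OF N(2) fimg per sp not_s_dvd_N] by blast
    obtain \<sigma> where \<sigma>: "\<sigma> \<in> T" "x \<otimes> y = y \<otimes> \<sigma>" using fdec[OF y(1)] y(2) by auto
    have yc: "y \<in> carrier G" using y Nc by auto
    have sc: "\<sigma> \<in> carrier G" using \<sigma> Tc by auto
    have "inv y \<otimes> x \<otimes> y = \<sigma>" using \<sigma>(2) yc xc sc by (simp add: m_assoc)
    then have cx: "inv y \<otimes> x \<otimes> y \<in> T" using \<sigma> by simp
    have "inv y \<otimes> z \<otimes> y \<in> T" if "z \<in> generate G {x}" for z
      using that
    proof (induction rule: generate.induct)
      case one then show ?case using yc subgroup.one_closed[OF subT] by simp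
    next
      case (incl h) then show ?case using cx by simp
    next
      case (inv h)
      then have "h = x" by simp
      have "inv y \<otimes> inv x \<otimes> y = inv (inv y \<otimes> x \<otimes> y)" using xc yc by (simp add: inv_mult_group m_assoc)
      then show ?case using subgroup.m_inv_closed[OF subT cx] \<open>h = x\<close> by simp
    next
      case (eng h1 h2)
      have c: "h1 \<in> carrier G" "h2 \<in> carrier G" using eng.hyps gK Kc by auto
      have "inv y \<otimes> (h1 \<otimes> h2) \<otimes> y = (inv y \<otimes> h1 \<otimes> y) \<otimes> (inv y \<otimes> h2 \<otimes> y)"
        using c yc by (simp add: m_assoc)
      then show ?case using subgroup.m_closed[OF subT eng.IH] by simp
    qed
    then show ?thesis using gK yc by blast
  qed
qed

end

context amalg begin

lemma conj_into:
  assumes S1: "semi G N1 t1 r s1 X1" and S2: "semi G N2 t2 r2 r X2"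
    and T2: "generate G {t2} \<subseteq> N1"
    and X: "(X1 = A \<and> X2 = B) \<or> (X1 = B \<and> X2 = A)"
    and H: "subgroup H G" "finite H" "\<exists>k. card H = r ^ k"
  shows "\<exists>g\<in>carrier G. conj_by G g ` H \<subseteq> N1"
proof -
  have Hc: "H \<subseteq> carrier G" by (rule subgroup.subset[OF H(1)])
  obtain g where g: "g \<in> carrier G" and alt: "(\<forall>h\<in>H. inv g \<otimes> h \<otimes> g \<in> A) \<or> (\<forall>h\<in>H. inv g \<otimes> h \<otimes> g \<in> B)"
    using fixed_point[OF H(1) H(2)] by blast
  define K where "K = (\<lambda>h. inv g \<otimes> h \<otimes> g) ` H"
  have subK: "subgroup K G" unfolding K_def by (rule conj_subgroup[OF H(1) g])
  have finK: "finite K" unfolding K_def using H(2) by blast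
  have cK: "\<exists>k. card K = r ^ k" unfolding K_def using conj_card[OF Hc g] H(3) by simp
  have KX: "K \<subseteq> X1 \<or> K \<subseteq> X2" using alt X unfolding K_def by blast
  have conjK: "conj_by G (inv g) h \<in> K" if "h \<in> H" for h
    using that g unfolding conj_by_def K_def by simp
  show ?thesis
  proof (cases "K \<subseteq> X1")
    case True
    have "K \<subseteq> N1"
      using semi.sub_N[OF S1 subK finK _ cK] semi.Mdef[OF S1] True by blast
    then show ?thesis using conjK g by (intro bexI[of _ "inv g"]) auto
  next
    case False
    then have KX2: "K \<subseteq> X2" using KX by blast
    obtain y where y: "y \<in> carrier G" "\<forall>x\<in>K. inv y \<otimes> x \<otimes> y \<in> generate G {t2}"
      using semi.conj_T[OF S2 subK finK KX2 cK] by blast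
    have "conj_by G (inv y \<otimes> inv g) h \<in> N1" if h: "h \<in> H" for h
    proof -
      have hc: "h \<in> carrier G" using h Hc by blast
      have "conj_by G (inv y \<otimes> inv g) h = inv y \<otimes> (inv g \<otimes> h \<otimes> g) \<otimes> y"
        unfolding conj_by_def using y(1) g hc by (simp add: inv_mult_group m_assoc)
      moreover have "inv g \<otimes> h \<otimes> g \<in> K" unfolding K_def using h by blast
      ultimately show ?thesis using y(2) T2 by auto
    qed
    then show ?thesis using y(1) g by (intro bexI[of _ "inv y \<otimes> inv g"]) auto
  qed
qed

end

theorem mainTheorem7:
  fixes Xg :: "'a monoid" (structure) and p q m n :: nat
    and Q P A B C :: "'a set" and \<alpha> \<beta> :: 'a
  assumes "Factorial_Ring.prime p" and "Factorial_Ring.prime q" and "odd p" and "odd q" and "p \<noteq> q"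
    and "m = (LEAST k. 0 < k \<and> p dvd Sp_order k (int q))"
    and "n = (LEAST k. 0 < k \<and> q dvd Sp_order k (int p))"
    and "extraspecial Xg q Q" and "card Q = q ^ (2*m+1)" and "has_exponent Xg Q q"
    and "extraspecial Xg p P" and "card P = p ^ (2*n+1)" and "has_exponent Xg P p"
    and "good_action Xg Q \<alpha> p" and "good_action Xg P \<beta> q"
    and "A = Q <#>\<^bsub>Xg\<^esub> generate Xg {\<alpha>}"
    and "B = P <#>\<^bsub>Xg\<^esub> generate Xg {\<beta>}"
    and "generate Xg {\<alpha>} = sub_center Xg P"
    and "sub_center Xg Q = generate Xg {\<beta>}"
    and "C = sub_center Xg Q <#>\<^bsub>Xg\<^esub> generate Xg {\<alpha>}"
    and "C = sub_center Xg P <#>\<^bsub>Xg\<^esub> generate Xg {\<beta>}"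
    and "is_amalgamated_product Xg A B C"
  shows "(\<forall>H. subgroup H Xg \<and> finite H \<and> (\<exists>k. card H = q ^ k) \<longrightarrow>
            (\<exists>g\<in>carrier Xg. conj_by Xg g ` H \<subseteq> Q))
       \<and> (\<forall>H. subgroup H Xg \<and> finite H \<and> (\<exists>k. card H = p ^ k) \<longrightarrow>
            (\<exists>g\<in>carrier Xg. conj_by Xg g ` H \<subseteq> P))"
proof -
  note am = assms(22)[unfolded is_amalgamated_product_def]
  have grp: "group Xg" using am by blast
  have "amalg Xg A B C" unfolding amalg_def amalg_axioms_def using am by blast
  then interpret amalg Xg A B C .
  have exQ: "subgroup Q Xg" "finite Q" using assms(8) unfolding extraspecial_def by auto
  have exP: "subgroup P Xg" "finite P" using assms(11) unfolding extraspecial_def by auto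
  have gaQ: "\<alpha> \<in> carrier Xg" "ord \<alpha> = p" "conj_by Xg \<alpha> ` Q = Q" "Q \<inter> generate Xg {\<alpha>} = {\<one>}"
    using assms(14) unfolding good_action_def by auto
  have gaP: "\<beta> \<in> carrier Xg" "ord \<beta> = q" "conj_by Xg \<beta> ` P = P" "P \<inter> generate Xg {\<beta>} = {\<one>}"
    using assms(15) unfolding good_action_def by auto
  have cQ: "\<exists>a. card Q = q ^ a" using assms(9) by blast
  have cP: "\<exists>a. card P = p ^ a" using assms(12) by blast
  have SA: "semi Xg Q \<alpha> q p A"
    unfolding semi_def semi_axioms_def using grp exQ gaQ cQ assms(1,2,5,16) subA by auto
  have SB: "semi Xg P \<beta> p q B"
    unfolding semi_def semi_axioms_def using grp exP gaP cP assms(1,2,5,17) subB by auto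
  have bQ: "generate Xg {\<beta>} \<subseteq> Q" using assms(19) unfolding sub_center_def by blast
  have aP: "generate Xg {\<alpha>} \<subseteq> P" using assms(18) unfolding sub_center_def by blast
  show ?thesis
  proof (intro conjI allI impI)
    fix H assume H: "subgroup H Xg \<and> finite H \<and> (\<exists>k. card H = q ^ k)"
    show "\<exists>g\<in>carrier Xg. conj_by Xg g ` H \<subseteq> Q"
      using conj_into[OF SA SB bQ _ ] H by blast
  next
    fix H assume H: "subgroup H Xg \<and> finite H \<and> (\<exists>k. card H = p ^ k)"
    show "\<exists>g\<in>carrier Xg. conj_by Xg g ` H \<subseteq> P"
      using conj_into[OF SB SA aP _ ] H by blast
  qed
qed

end
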